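(* For every set $I\subseteq[n]$ of $k$ distinct participants, the secret $\mathbf s$ is uniquely determined by the shares $(t_i)_{i\in I}$: there is a function $g_I$ such that $g_I((t_i)_{i\in I})=\mathbf s$ for all values of $\mathbf s$ and of the random entries of $M$.
   Context: Fix integers $n\ge k\ge 2$ and $d\ge k$, and a finite field $\mathbb{F}_q$ with $q>n$ (the integers $1,\dots,n$ are regarded as distinct elements of $\mathbb{F}_q$). For $i\in[n]=\{1,\dots,n\}$ let $\psi_i=(1,i,i^2,\dots,i^{d-1})^T\in\mathbb{F}_q^d$. The secret is $\mathbf s=(s_1,\dots,s_{d-k+1})\in\mathbb{F}_q^{d-k+1}$; write $s_A=s_{d-k+1}\in\mathbb{F}_q$ and $s_B=(s_1,\dots,s_{d-k})^T\in\mathbb{F}_q^{d-k}$. The dealer forms the symmetric $d\times d$ matrix $$M=\begin{pmatrix} s_A & r_a^T & s_B^T\\ r_a & R_b & R_c^T\\ s_B & R_c & 0\end{pmatrix}$$ with row/column blocks of sizes $1,\,k-1,\,d-k$, where $r_a\in\mathbb{F}_q^{k-1}$, $R_b$ is a symmetric $(k-1)\times(k-1)$ matrix, $R_c$ is a $(d-k)\times(k-1)$ matrix, and $0$ is the $(d-k)\times(d-k)$ zero matrix; the $R=(k-1)d-\binom{k-1}{2}$ free entries of $r_a,R_b,R_c$ (for $R_b$: the entries on and above the diagonal) are independent, uniform on $\mathbb{F}_q$, and independent of $\mathbf s$. The share of participant $j$ is $t_j^T=\psi_j^T N$, where $N=\begin{pmatrix} s_A & s_B^T\\ r_a & R_c^T\\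 s_B & 0\end{pmatrix}$ is the $d\times(d-k+1)$ matrix formed by the first column and the last $d-k$ columns of $M$. *)

theory Defs
  imports Main "HOL-Library.FuncSet"
begin

text \<open>Matrices are 0-based functions nat => nat => 'a. Rows/columns of M are
  0..d-1, with blocks {0}, {1..k-1}, {k..d-1}.  The secret is a list s of length
  d-k+1 (s!0..s!(d-k-1) = s_B, s!(d-k) = s_A).  ra i = (r_a)_{i+1} (i<k-1),
  Rb i j (i<=j<k-1) are the on/above-diagonal entries of the symmetric R_b,
  Rc i j ((d-k) x (k-1)) are the entries of R_c.\<close>

definition dealer_M ::
  "nat \<Rightarrow> nat \<Rightarrow> 'a::field list \<Rightarrow> (nat \<Rightarrow> 'a) \<Rightarrow> (nat \<Rightarrow> nat \<Rightarrow> 'a)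
   \<Rightarrow> (nat \<Rightarrow> nat \<Rightarrow> 'a) \<Rightarrow> nat \<Rightarrow> nat \<Rightarrow> 'a" where
  "dealer_M d k s ra Rb Rc r c =
     (if r = 0 \<and> c = 0 then s ! (d - k)
      else if r = 0 \<and> 1 \<le> c \<and> c \<le> k - 1 then ra (c - 1)
      else if r = 0 \<and> k \<le> c then s ! (c - k)
      else if 1 \<le> r \<and> r \<le> k - 1 \<and> c = 0 then ra (r - 1)
      else if 1 \<le> r \<and> r \<le> k - 1 \<and> 1 \<le> c \<and> c \<le> k - 1 then
        (if r \<le> c then Rb (r - 1) (c - 1) else Rb (c - 1) (r - 1))
      else if 1 \<le> r \<and> r \<le> k - 1 \<and> k \<le> c then Rc (c - k) (r - 1)
      else if k \<le> r \<and> c = 0 then s ! (r - k)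
      else if k \<le> r \<and> 1 \<le> c \<and> c \<le> k - 1 then Rc (r - k) (c - 1)
      else 0)"

definition dealer_N ::
  "nat \<Rightarrow> nat \<Rightarrow> 'a::field list \<Rightarrow> (nat \<Rightarrow> 'a) \<Rightarrow> (nat \<Rightarrow> nat \<Rightarrow> 'a)
   \<Rightarrow> (nat \<Rightarrow> nat \<Rightarrow> 'a) \<Rightarrow> nat \<Rightarrow> nat \<Rightarrow> 'a" where
  "dealer_N d k s ra Rb Rc r c = dealer_M d k s ra Rb Rc r (if c = 0 then 0 else c + k - 1)"

text \<open>psi_i = (1, a_i, ..., a_i^(d-1)) where a_i is the field element representing i.\<close>
definition psi :: "(nat \<Rightarrow> 'a::field) \<Rightarrow> nat \<Rightarrow> nat \<Rightarrow> 'a" where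
  "psi \<alpha> i r = \<alpha> i ^ r"

definition share ::
  "nat \<Rightarrow> nat \<Rightarrow> (nat \<Rightarrow> 'a::field) \<Rightarrow> 'a list \<Rightarrow> (nat \<Rightarrow> 'a) \<Rightarrow> (nat \<Rightarrow> nat \<Rightarrow> 'a)
   \<Rightarrow> (nat \<Rightarrow> nat \<Rightarrow> 'a) \<Rightarrow> nat \<Rightarrow> 'a list" where
  "share d k \<alpha> s ra Rb Rc j =
     map (\<lambda>c. \<Sum>r<d. psi \<alpha> j r * dealer_N d k s ra Rb Rc r c) [0..<d - k + 1]"

end

theory Submission
  imports Defs "HOL-Computational_Algebra.Polynomial"
begin

lemma key:
  fixes \<alpha> :: "nat \<Rightarrow> 'a::field"
  assumes "finite I" "card I = k" "inj_on \<alpha> I" "1 \<le> k"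
    and "\<forall>i\<in>I. (\<Sum>r<k. h r * \<alpha> i ^ r) = 0"
  shows "h 0 = 0"
proof -
  define p where "p = (\<Sum>r<k. monom (h r) r)"
  have pv: "poly p (\<alpha> i) = 0" if "i \<in> I" for i
    using assms(5) that by (simp add: p_def poly_sum poly_monom)
  have dg: "degree p \<le> k - 1"
    unfolding p_def by (rule degree_sum_le) (auto intro: order_trans[OF degree_monom_le])
  have "p = 0"
  proof (rule ccontr)
    assume "p \<noteq> 0"
    have "k = card (\<alpha> ` I)" using assms by (simp add: card_image)
    also have "\<dots> \<le> card {x. poly p x = 0}"
      by (intro card_mono poly_roots_finite[OF \<open>p \<noteq> 0\<close>]) (auto simp: pv)
    also have "\<dots> \<le> degree p" by (rule card_poly_roots_bound[OF \<open>p \<noteq> 0\<close>])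
    finally show False using dg assms(4) by linarith
  qed
  have "coeff p 0 = h 0"
    unfolding p_def coeff_sum using assms(4)
    by (simp add: sum.If_cases lessThan_def) 
  with \<open>p = 0\<close> show ?thesis by simp
qed

lemma reduce:
  assumes "\<forall>r. k \<le> r \<and> r < d \<longrightarrow> h r = 0" "k \<le> d"
  shows "(\<Sum>r<d. (x::'a::field) ^ r * h r) = (\<Sum>r<k. h r * x ^ r)"
proof -
  have "(\<Sum>r<d. x ^ r * h r) = (\<Sum>r<k. x ^ r * h r)"
    by (rule sum.mono_neutral_right) (use assms in auto)
  then show ?thesis by (simp add: mult.commute)
qed

lemma share_nth:
  "c < d - k + 1 \<Longrightarrow> share d k \<alpha> s ra Rb Rc j ! c = (\<Sum>r<d. \<alpha> j ^ r * dealer_N d k s ra Rb Rc r c)"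
  unfolding share_def psi_def by (subst nth_map) (auto simp del: upt_Suc)

lemma N_col_hi:
  assumes "2 \<le> k" "1 \<le> c" "k \<le> r"
  shows "dealer_N d k s ra Rb Rc r c = 0"
proof -
  have "\<not> c + k - 1 \<le> k - 1" "k \<le> c + k - 1" "\<not> r \<le> k - 1" "r \<noteq> 0" using assms by auto
  then show ?thesis using assms by (simp add: dealer_N_def dealer_M_def)
qed

lemma N_col_0:
  assumes "2 \<le> k" "1 \<le> c"
  shows "dealer_N d k s ra Rb Rc 0 c = s ! (c - 1)"
proof -
  have "\<not> c + k - 1 \<le> k - 1" "k \<le> c + k - 1" "c + k - 1 - k = c - 1" using assms by auto
  then show ?thesis using assms by (simp add: dealer_N_def dealer_M_def)
qed

lemma N0_0:
  assumes "2 \<le> k"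
  shows "dealer_N d k s ra Rb Rc 0 0 = s ! (d - k)"
  using assms by (simp add: dealer_N_def dealer_M_def)

lemma N0_hi:
  assumes "2 \<le> k" "k \<le> r"
  shows "dealer_N d k s ra Rb Rc r 0 = s ! (r - k)"
proof -
  have "\<not> r \<le> k - 1" "r \<noteq> 0" using assms by auto
  then show ?thesis using assms by (simp add: dealer_N_def dealer_M_def)
qed

lemma uniq:
  fixes \<alpha> :: "nat \<Rightarrow> 'a::field"
  assumes k2: "2 \<le> k" and kd: "k \<le> d" and fin: "finite I" "card I = k" "inj_on \<alpha> I"
    and ls: "length s = d - k + 1" "length s' = d - k + 1"
    and eq: "\<forall>i\<in>I. share d k \<alpha> s ra Rb Rc i = share d k \<alpha> s' ra' Rb' Rc' i"
  shows "s = s'"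
proof -
  let ?N = "dealer_N d k s ra Rb Rc" and ?N' = "dealer_N d k s' ra' Rb' Rc'"
  have col: "\<forall>i\<in>I. (\<Sum>r<d. \<alpha> i ^ r * (?N r c - ?N' r c)) = 0" if "c < d - k + 1" for c
  proof
    fix i assume "i \<in> I"
    have "share d k \<alpha> s ra Rb Rc i ! c = share d k \<alpha> s' ra' Rb' Rc' i ! c"
      using eq \<open>i \<in> I\<close> by simp
    then have "(\<Sum>r<d. \<alpha> i ^ r * ?N r c) = (\<Sum>r<d. \<alpha> i ^ r * ?N' r c)"
      using that by (simp add: share_nth)
    then show "(\<Sum>r<d. \<alpha> i ^ r * (?N r c - ?N' r c)) = 0"
      by (simp add: right_diff_distrib sum_subtractf)
  qed
  have low: "s ! j = s' ! j" if "j < d - k" for j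
  proof -
    have "\<forall>i\<in>I. (\<Sum>r<k. (?N r (Suc j) - ?N' r (Suc j)) * \<alpha> i ^ r) = 0"
    proof
      fix i assume "i \<in> I"
      have "(\<Sum>r<d. \<alpha> i ^ r * (?N r (Suc j) - ?N' r (Suc j)))
          = (\<Sum>r<k. (?N r (Suc j) - ?N' r (Suc j)) * \<alpha> i ^ r)"
        by (rule reduce) (use k2 kd in \<open>auto simp: N_col_hi[OF k2]\<close>)
      then show "(\<Sum>r<k. (?N r (Suc j) - ?N' r (Suc j)) * \<alpha> i ^ r) = 0"
        using col[of "Suc j"] that \<open>i \<in> I\<close> by auto
    qed
    note S = this
    have "?N 0 (Suc j) - ?N' 0 (Suc j) = 0"
      using key[where h = "\<lambda>r. ?N r (Suc j) - ?N' r (Suc j)", OF fin _ S] k2 by auto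
    then show ?thesis using N_col_0[OF k2, of "Suc j"] by (metis diff_Suc_1 eq_iff_diff_eq_0 le_add1 plus_1_eq_Suc)
  qed
  have top: "s ! (d - k) = s' ! (d - k)"
  proof -
    have "\<forall>i\<in>I. (\<Sum>r<k. (?N r 0 - ?N' r 0) * \<alpha> i ^ r) = 0"
    proof
      fix i assume "i \<in> I"
      have "(\<Sum>r<d. \<alpha> i ^ r * (?N r 0 - ?N' r 0))
          = (\<Sum>r<k. (?N r 0 - ?N' r 0) * \<alpha> i ^ r)"
        by (rule reduce) (use k2 kd in \<open>auto simp: N0_hi[OF k2] intro!: low\<close>)
      then show "(\<Sum>r<k. (?N r 0 - ?N' r 0) * \<alpha> i ^ r) = 0"
        using col[of 0] \<open>i \<in> I\<close> by auto
    qed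
    note S = this
    have "?N 0 0 - ?N' 0 0 = 0"
      using key[where h = "\<lambda>r. ?N r 0 - ?N' r 0", OF fin _ S] k2 by auto
    then show ?thesis using N0_0[OF k2] by (metis eq_iff_diff_eq_0)
  qed
  show ?thesis
  proof (rule nth_equalityI)
    show "length s = length s'" using ls by simp
    fix j assume "j < length s"
    then have "j < d - k \<or> j = d - k" using ls by auto
    then show "s ! j = s' ! j" using low top by auto
  qed
qed

theorem theorem2:
  fixes n k d :: nat and \<alpha> :: "nat \<Rightarrow> 'a::{finite,field}"
  assumes "2 \<le> k" "k \<le> n" "k \<le> d" "n < card (UNIV :: 'a set)" "inj_on \<alpha> {1..n}"
  shows "\<forall>I. I \<subseteq> {1..n} \<and> card I = k \<longrightarrow>
           (\<exists>g. \<forall>s ra Rb Rc. length s = d - k + 1 \<longrightarrow>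
              g (\<lambda>i\<in>I. share d k \<alpha> s ra Rb Rc i) = s)"
proof (intro allI impI)
  fix I :: "nat set" assume I: "I \<subseteq> {1..n} \<and> card I = k"
  have fin: "finite I" using I finite_subset by blast
  have inj: "inj_on \<alpha> I" using I assms(5) inj_on_subset by blast
  define g where "g x = (SOME s. \<exists>ra Rb Rc. length s = d - k + 1 \<and>
      x = (\<lambda>i\<in>I. share d k \<alpha> s ra Rb Rc i))" for x
  show "\<exists>g. \<forall>s ra Rb Rc. length s = d - k + 1 \<longrightarrow>
              g (\<lambda>i\<in>I. share d k \<alpha> s ra Rb Rc i) = s"
  proof (intro exI allI impI)
    fix s :: "'a list" and ra Rb Rc assume ls: "length s = d - k + 1"
    let ?x = "\<lambda>i\<in>I. share d k \<alpha> s ra Rb Rc i"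
    have "\<exists>ra' Rb' Rc'. length (g ?x) = d - k + 1 \<and> ?x = (\<lambda>i\<in>I. share d k \<alpha> (g ?x) ra' Rb' Rc' i)"
      unfolding g_def by (rule someI_ex) (use ls in blast)
    then obtain ra' Rb' Rc' where l2: "length (g ?x) = d - k + 1"
      and e: "?x = (\<lambda>i\<in>I. share d k \<alpha> (g ?x) ra' Rb' Rc' i)" by blast
    have "\<forall>i\<in>I. share d k \<alpha> s ra Rb Rc i = share d k \<alpha> (g ?x) ra' Rb' Rc' i"
      using fun_cong[OF e] by (metis restrict_apply')
    then have "s = g ?x"
      by (intro uniq[OF assms(1) assms(3) fin _ inj ls l2]) (use I in auto)
    then show "g ?x = s" by simp
  qed
qed

end
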